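(* Let $T^{2,2}$ and $T^{2,3}$ be the policies with $T^{2,2}_i=\mathcal{R}_{2,2}(T_i^* )$ and $T^{2,3}_i=\mathcal{R}_{2,3}(T_i^* )$ for every $i\in[n]$. Both are resource-feasible and $\min\{F(T^{2,2}),F(T^{2,3})\}\le 1.3776\cdot\mathrm{OPT}(P)$.
   Context: An instance consists of integers $n\ge 1$, $D\ge 1$; a joint ordering cost $K_0>0$; for each commodity $i\in[n]$ an ordering cost $K_i>0$ and a holding coefficient $H_i>0$; and resource coefficients $\alpha_{id}\ge 0$. A policy is $T=(T_1,\dots,T_n)\in\mathbb{R}_{>0}^n$; it is resource-feasible if $\sum_{i}\alpha_{id}/T_i\le 1$ for every $d\in[D]$. For $g>0$, $\Delta\ge 0$, $\mathcal{M}_{g,\Delta}=\{0,g,\dots,\lfloor\Delta/g\rfloor g\}$; $N(T,\Delta)=|\bigcup_{i}\mathcal{M}_{T_i,\Delta}|$; $J(T)=K_0\limsup_{\Delta\to\infty}N(T,\Delta)/\Delta$; $F(T)=J(T)+\sum_i(K_i/T_i+H_iT_i)$. The convex relaxation (P) is: minimize $K_0/T_{\min}+\sum_{i\in[n]}(K_i/T_i+H_iT_i)$ over $(T_{\min},T_1,\dots,T_n)$ subject to $T_i\ge T_{\min}\ge0$ for all $i$ and $\sum_i\alpha_{id}/T_i\le1$ for all $d$. $\mathrm{OPT}(P)$ is its optimal value and $T^*=(T^*_{\min},T^*_1,\dots,T^*_n)$ is a fixed optimal solution (with $T^*_{\min}>0$). For integers $m\ge2$, $k\ge1$: $\mathcal{G}_{m,k}=\{m^{p/k}T^*_{\min}:p\in\mathbb{Z}\}$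 and $\mathcal{R}_{m,k}(t)=\min\{g\in\mathcal{G}_{m,k}:g>t\}$ for $t>0$. *)

theory Defs
  imports "HOL-Analysis.Analysis"
begin

text \<open>Commodities are indexed by i < n, resources by d < D.
  Policies are functions nat => real (only the values at i < n matter).\<close>

definition resource_feasible ::
  "nat \<Rightarrow> nat \<Rightarrow> (nat \<Rightarrow> nat \<Rightarrow> real) \<Rightarrow> (nat \<Rightarrow> real) \<Rightarrow> bool" where
  "resource_feasible n D \<alpha> T \<longleftrightarrow>
     (\<forall>i<n. T i > 0) \<and> (\<forall>d<D. (\<Sum>i<n. \<alpha> i d / T i) \<le> 1)"

definition mults :: "real \<Rightarrow> real \<Rightarrow> real set" where
  "mults g \<Delta> = {of_int k * g | k::int. 0 \<le> k \<and> k \<le> \<lfloor>\<Delta> / g\<rfloor>}"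

definition Npts :: "nat \<Rightarrow> (nat \<Rightarrow> real) \<Rightarrow> real \<Rightarrow> nat" where
  "Npts n T \<Delta> = card (\<Union>i<n. mults (T i) \<Delta>)"

definition Jcost :: "real \<Rightarrow> nat \<Rightarrow> (nat \<Rightarrow> real) \<Rightarrow> ereal" where
  "Jcost K0 n T = ereal K0 * Limsup at_top (\<lambda>\<Delta>::real. ereal (real (Npts n T \<Delta>) / \<Delta>))"

definition Fcost :: "real \<Rightarrow> (nat \<Rightarrow> real) \<Rightarrow> (nat \<Rightarrow> real) \<Rightarrow> nat \<Rightarrow> (nat \<Rightarrow> real) \<Rightarrow> ereal" where
  "Fcost K0 K H n T = Jcost K0 n T + ereal (\<Sum>i<n. K i / T i + H i * T i)"

text \<open>Points with Tmin = 0 have objective +infinity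
  in the paper (K0/0); they never matter for the infimum or for optimality, so the feasible
  region is restricted to Tmin > 0 (Isabelle has x/0 = 0).\<close>
definition P_feasible ::
  "nat \<Rightarrow> nat \<Rightarrow> (nat \<Rightarrow> nat \<Rightarrow> real) \<Rightarrow> real \<Rightarrow> (nat \<Rightarrow> real) \<Rightarrow> bool" where
  "P_feasible n D \<alpha> Tmin T \<longleftrightarrow>
     Tmin > 0 \<and> (\<forall>i<n. T i \<ge> Tmin) \<and> (\<forall>d<D. (\<Sum>i<n. \<alpha> i d / T i) \<le> 1)"

definition P_obj :: "real \<Rightarrow> (nat \<Rightarrow> real) \<Rightarrow> (nat \<Rightarrow> real) \<Rightarrow> nat \<Rightarrow> real \<Rightarrow> (nat \<Rightarrow> real) \<Rightarrow> real" where
  "P_obj K0 K H n Tmin T = K0 / Tmin + (\<Sum>i<n. K i / T i + H i * T i)"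

definition OPT_P :: "nat \<Rightarrow> nat \<Rightarrow> real \<Rightarrow> (nat \<Rightarrow> real) \<Rightarrow> (nat \<Rightarrow> real) \<Rightarrow> (nat \<Rightarrow> nat \<Rightarrow> real) \<Rightarrow> real" where
  "OPT_P n D K0 K H \<alpha> = (INF x \<in> {(Tmin, T). P_feasible n D \<alpha> Tmin T}. P_obj K0 K H n (fst x) (snd x))"

definition P_optimal ::
  "nat \<Rightarrow> nat \<Rightarrow> real \<Rightarrow> (nat \<Rightarrow> real) \<Rightarrow> (nat \<Rightarrow> real) \<Rightarrow> (nat \<Rightarrow> nat \<Rightarrow> real) \<Rightarrow> real \<Rightarrow> (nat \<Rightarrow> real) \<Rightarrow> bool" where
  "P_optimal n D K0 K H \<alpha> Tmin T \<longleftrightarrow> P_feasible n D \<alpha> Tmin T \<and>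
     (\<forall>Tmin' T'. P_feasible n D \<alpha> Tmin' T' \<longrightarrow> P_obj K0 K H n Tmin T \<le> P_obj K0 K H n Tmin' T')"

definition grid :: "nat \<Rightarrow> nat \<Rightarrow> real \<Rightarrow> real set" where
  "grid m k Tmin = {real m powr (real_of_int p / real k) * Tmin | p::int. True}"

definition round_up :: "nat \<Rightarrow> nat \<Rightarrow> real \<Rightarrow> real \<Rightarrow> real" where
  "round_up m k Tmin t = Inf {g \<in> grid m k Tmin. g > t}"

end

theory Submission
  imports Defs
begin


lemma round_up_char:
  fixes k :: nat and Tmin t :: real
  assumes k: "k \<ge> 1" and tm: "Tmin > 0" and tt: "t \<ge> Tmin"
  shows "\<exists>p::int. p \<ge> 1 \<and> round_up 2 k Tmin t = 2 powr (real_of_int p / real k) * Tmin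
           \<and> t < round_up 2 k Tmin t \<and> round_up 2 k Tmin t \<le> 2 powr (1 / real k) * t"
proof -
  define L where "L = log 2 (t / Tmin)"
  have tpos: "t > 0" using tm tt by linarith
  have L0: "L \<ge> 0" unfolding L_def using tm tt by (simp add: field_simps)
  have tL: "t = 2 powr L * Tmin" unfolding L_def using tm tpos by simp
  define p where "p = \<lfloor>real k * L\<rfloor> + 1"
  have kpos: "real k > 0" using k by simp
  have p1: "p \<ge> 1" unfolding p_def using L0 by simp
  have a1: "real k * L < real_of_int p" unfolding p_def by linarith
  have a2: "real_of_int p \<le> real k * L + 1" unfolding p_def by linarith
  have pgt: "real_of_int p / real k > L"
    using kpos a1 by (simp add: pos_less_divide_eq mult.commute)
  have ple: "real_of_int p / real k \<le> L + 1 / real k"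
    using kpos a2 by (simp add: field_simps)
  define g0 where "g0 = 2 powr (real_of_int p / real k) * Tmin"
  define S where "S = {g \<in> grid 2 k Tmin. g > t}"
  have g0S: "g0 \<in> S"
  proof -
    have "2 powr L < 2 powr (real_of_int p / real k)" using pgt by simp
    hence "t < g0" unfolding g0_def using tL tm by simp
    thus ?thesis unfolding S_def grid_def g0_def by auto
  qed
  have g0min: "g0 \<le> g" if gS: "g \<in> S" for g
  proof -
    have gG: "g \<in> grid 2 k Tmin" and gt: "g > t" using gS unfolding S_def by simp_all
    obtain q :: int where gq0: "g = real 2 powr (real_of_int q / real k) * Tmin"
      using gG unfolding grid_def by blast
    have gq: "g = 2 powr (real_of_int q / real k) * Tmin" using gq0 by simp
    have "2 powr L * Tmin < 2 powr (real_of_int q / real k) * Tmin" using gq gt tL by simp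
    hence "2 powr L < 2 powr (real_of_int q / real k)" using tm by simp
    hence "L < real_of_int q / real k" by simp
    hence "real k * L < real_of_int q" using kpos by (simp add: field_simps)
    hence "q \<ge> p" unfolding p_def by linarith
    hence "real_of_int p / real k \<le> real_of_int q / real k" using kpos by (simp add: divide_right_mono)
    thus ?thesis unfolding g0_def gq using tm by simp
  qed
  have eq: "round_up 2 k Tmin t = g0"
    unfolding round_up_def S_def[symmetric] by (rule cInf_eq_minimum[OF g0S g0min])
  have tg: "t < g0" using g0S unfolding S_def by simp
  have gle: "g0 \<le> 2 powr (1 / real k) * t"
  proof -
    have "2 powr (real_of_int p / real k) \<le> 2 powr (L + 1 / real k)" using ple by simp
    also have "\<dots> = 2 powr (1 / real k) * 2 powr L" by (simp add: powr_add)
    finally have "g0 \<le> 2 powr (1 / real k) * 2 powr L * Tmin"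
      unfolding g0_def using tm by (intro mult_right_mono) auto
    thus ?thesis using tL by (simp add: mult.assoc)
  qed
  show ?thesis
  proof (intro exI[of _ p] conjI)
    show "p \<ge> 1" by (rule p1)
    show "round_up 2 k Tmin t = 2 powr (real_of_int p / real k) * Tmin" using eq g0_def by simp
    show "t < round_up 2 k Tmin t" using eq tg by simp
    show "round_up 2 k Tmin t \<le> 2 powr (1 / real k) * t" using eq gle by simp
  qed
qed

lemma powr_split:
  fixes k :: nat and p :: int
  assumes k: "k \<ge> 1" and p: "p \<ge> 1"
  shows "\<exists>j\<in>{1..k}. \<exists>q::nat. (2::real) powr (real_of_int p / real k) = 2 ^ q * 2 powr (real j / real k)"
proof -
  define q where "q = (p - 1) div int k"
  define j where "j = (p - 1) mod int k + 1"
  have kp: "int k > 0" using k by simp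
  have q0: "q \<ge> 0" unfolding q_def using p kp by (simp add: pos_imp_zdiv_nonneg_iff)
  have m1: "(p - 1) mod int k < int k" "(p - 1) mod int k \<ge> 0" using kp by simp_all
  have j1: "j \<ge> 1" "j \<le> int k" unfolding j_def using m1 by linarith+
  have dm: "(p - 1) div int k * int k + (p - 1) mod int k = p - 1" by (rule div_mult_mod_eq)
  have pe: "p = int k * q + j" unfolding q_def j_def using dm by (simp only: mult.commute)
  have e1: "real_of_int p = real k * real_of_int q + real_of_int j" using pe
    by (metis of_int_add of_int_mult of_int_of_nat_eq)
  have rk: "real k > 0" using k by simp
  have e2: "real_of_int p / real k = real_of_int q + real_of_int j / real k"
    unfolding e1 using rk by (simp add: add_divide_distrib)
  have "real_of_int p / real k = real (nat q) + real (nat j) / real k"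
    unfolding e2 using q0 j1 by simp
  hence "(2::real) powr (real_of_int p / real k) = 2 ^ (nat q) * 2 powr (real (nat j) / real k)"
    by (simp add: powr_add powr_realpow)
  moreover have "nat j \<in> {1..k}" using j1 by auto
  ultimately show ?thesis by blast
qed

lemma mults_sub:
  fixes g \<Delta> :: real and q :: nat
  assumes g: "g > 0"
  shows "mults (2 ^ q * g) \<Delta> \<subseteq> mults g \<Delta>"
proof
  fix x assume "x \<in> mults (2 ^ q * g) \<Delta>"
  then obtain m :: int where x: "x = of_int m * (2 ^ q * g)" and m0: "0 \<le> m"
    and mle: "m \<le> \<lfloor>\<Delta> / (2 ^ q * g)\<rfloor>" unfolding mults_def by auto
  have "real_of_int m \<le> \<Delta> / (2 ^ q * g)" using mle by linarith
  hence "real_of_int m * 2 ^ q \<le> \<Delta> / g" using g by (simp add: field_simps)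
  hence "m * 2 ^ q \<le> \<lfloor>\<Delta> / g\<rfloor>" by (simp add: le_floor_iff)
  moreover have "x = of_int (m * 2 ^ q) * g" using x by simp
  moreover have "0 \<le> m * 2 ^ q" using m0 by simp
  ultimately show "x \<in> mults g \<Delta>" unfolding mults_def by blast
qed

lemma mults_card:
  fixes g \<Delta> :: real
  assumes g: "g > 0" and d: "\<Delta> \<ge> 0"
  shows "finite (mults g \<Delta>) \<and> real (card (mults g \<Delta>)) \<le> \<Delta> / g + 1"
proof -
  have eq: "mults g \<Delta> = (\<lambda>m. of_int m * g) ` {0..\<lfloor>\<Delta> / g\<rfloor>}" unfolding mults_def by auto
  have "card (mults g \<Delta>) \<le> card {0..\<lfloor>\<Delta> / g\<rfloor>}" unfolding eq by (rule card_image_le) simp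
  also have "\<dots> = nat (\<lfloor>\<Delta> / g\<rfloor> + 1)" by simp
  finally have "real (card (mults g \<Delta>)) \<le> real (nat (\<lfloor>\<Delta> / g\<rfloor> + 1))" by linarith
  also have "\<dots> = real_of_int (\<lfloor>\<Delta> / g\<rfloor> + 1)" using g d by simp
  also have "\<dots> \<le> \<Delta> / g + 1" by linarith
  finally show ?thesis unfolding eq by simp
qed


lemma jbound:
  fixes k n :: nat and K0 Tmin :: real and T :: "nat \<Rightarrow> real"
  assumes k: "k \<ge> 1" and tm: "Tmin > 0" and K0: "K0 \<ge> 0"
    and TT: "\<And>i. i < n \<Longrightarrow> \<exists>p::int. p \<ge> 1 \<and> T i = 2 powr (real_of_int p / real k) * Tmin"
  shows "Jcost K0 n T \<le> ereal (K0 * (\<Sum>j\<in>{1..k}. 1 / (2 powr (real j / real k) * Tmin)))"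
proof -
  define g where "g j = 2 powr (real j / real k) * Tmin" for j :: nat
  define c where "c = (\<Sum>j\<in>{1..k}. 1 / g j)"
  have gpos: "g j > 0" for j unfolding g_def using tm by simp
  have sub: "(\<Union>i<n. mults (T i) \<Delta>) \<subseteq> (\<Union>j\<in>{1..k}. mults (g j) \<Delta>)" for \<Delta>
  proof
    fix x assume "x \<in> (\<Union>i<n. mults (T i) \<Delta>)"
    then obtain i where i: "i < n" and x: "x \<in> mults (T i) \<Delta>" by blast
    obtain p :: int where p: "p \<ge> 1" and Ti: "T i = 2 powr (real_of_int p / real k) * Tmin"
      using TT[OF i] by blast
    obtain j q where j: "j \<in> {1..k}" and q: "(2::real) powr (real_of_int p / real k) = 2 ^ q * 2 powr (real j / real k)"
      using powr_split[OF k p] by blast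
    have "T i = 2 ^ q * g j" unfolding Ti q g_def by simp
    hence "x \<in> mults (g j) \<Delta>" using x mults_sub[OF gpos[of j], of q \<Delta>] by auto
    thus "x \<in> (\<Union>j\<in>{1..k}. mults (g j) \<Delta>)" using j by blast
  qed
  have bnd: "real (Npts n T \<Delta>) / \<Delta> \<le> c + real k / \<Delta>" if d: "\<Delta> > 0" for \<Delta>
  proof -
    have fin: "finite (mults (g j) \<Delta>)" for j using mults_card[OF gpos[of j], of \<Delta>] d by simp
    have "card (\<Union>i<n. mults (T i) \<Delta>) \<le> card (\<Union>j\<in>{1..k}. mults (g j) \<Delta>)"
      by (rule card_mono) (use sub fin in auto)
    also have "\<dots> \<le> (\<Sum>j\<in>{1..k}. card (mults (g j) \<Delta>))" by (rule card_UN_le) simp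
    finally have "real (Npts n T \<Delta>) \<le> (\<Sum>j\<in>{1..k}. real (card (mults (g j) \<Delta>)))"
      unfolding Npts_def by (simp flip: of_nat_sum)
    also have "\<dots> \<le> (\<Sum>j\<in>{1..k}. \<Delta> / g j + 1)"
      by (rule sum_mono) (use mults_card[OF gpos] d in auto)
    also have "\<dots> = \<Delta> * c + real k" unfolding c_def by (simp add: sum.distrib sum_distrib_left)
    finally show ?thesis using d by (simp add: field_simps)
  qed
  have "Limsup at_top (\<lambda>\<Delta>::real. ereal (real (Npts n T \<Delta>) / \<Delta>))
        \<le> Limsup at_top (\<lambda>\<Delta>::real. ereal (c + real k / \<Delta>))"
  proof (rule Limsup_mono)
    show "\<forall>\<^sub>F x in at_top. ereal (real (Npts n T x) / x) \<le> ereal (c + real k / x)"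
      using eventually_gt_at_top[of "0::real"] by eventually_elim (use bnd in auto)
  qed
  also have "\<dots> = ereal c"
  proof (rule lim_imp_Limsup)
    show "(at_top::real filter) \<noteq> bot" by simp
    have "((\<lambda>\<Delta>::real. c + real k / \<Delta>) \<longlongrightarrow> c) at_top" 
      using tendsto_add[OF tendsto_const tendsto_divide_0[OF tendsto_const filterlim_at_top_imp_at_infinity[OF filterlim_ident]], of c "real k"]
      by simp
    thus "((\<lambda>\<Delta>::real. ereal (c + real k / \<Delta>)) \<longlongrightarrow> ereal c) at_top" by (simp add: lim_ereal)
  qed
  finally have L: "Limsup at_top (\<lambda>\<Delta>::real. ereal (real (Npts n T \<Delta>) / \<Delta>)) \<le> ereal c" .
  have "Jcost K0 n T \<le> ereal K0 * ereal c" unfolding Jcost_def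
    by (rule ereal_mult_left_mono[OF L]) (use K0 in simp)
  thus ?thesis unfolding c_def g_def by simp
qed

lemma cube_le: fixes a b :: real assumes "a ^ 3 \<le> b ^ 3" "0 \<le> b" shows "a \<le> b"
  using power_le_imp_le_base[of a 2 b] assms by (simp add: numeral_3_eq_3)

lemma nums:
  shows "2 powr (1/2) \<le> (1.414214::real)" and "1 / 2 powr (1/2) \<le> (0.707107::real)"
    and "2 powr (1/3) \<le> (1.2599211::real)" and "1 / 2 powr (1/3) \<le> (0.7937006::real)"
    and "1 / 2 powr (2/3) \<le> (0.6299606::real)"
proof -
  have s2: "(2 powr (1/2::real)) ^ 2 = (2::real)" by (simp add: powr_power)
  have c3: "(2 powr (1/3::real)) ^ 3 = (2::real)" by (simp add: powr_power)
  have c4: "(2 powr (2/3::real)) ^ 3 = (4::real)" by (simp add: powr_power)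
  show "2 powr (1/2) \<le> (1.414214::real)"
    using power_le_imp_le_base[of "2 powr (1/2::real)" 1 "1.414214"] s2 by (simp add: numeral_2_eq_2)
  have "1 \<le> 0.707107 * 2 powr (1/2::real)"
    using power_le_imp_le_base[of 1 1 "0.707107 * 2 powr (1/2::real)"] s2
    by (simp add: numeral_2_eq_2 power_mult_distrib)
  thus "1 / 2 powr (1/2) \<le> (0.707107::real)" by (simp add: divide_le_eq)
  show "2 powr (1/3) \<le> (1.2599211::real)"
    by (rule cube_le) (use c3 in \<open>simp_all add: power_divide\<close>)
  have e3: "(0.7937006 * 2 powr (1/3::real)) ^ 3 = 0.7937006 ^ 3 * 2" by (simp only: power_mult_distrib c3)
  have "1 \<le> 0.7937006 * 2 powr (1/3::real)"
    by (rule cube_le) (use e3 in \<open>simp_all add: power_divide\<close>)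
  thus "1 / 2 powr (1/3) \<le> (0.7937006::real)" by (simp add: divide_le_eq)
  have e4: "(0.6299606 * 2 powr (2/3::real)) ^ 3 = 0.6299606 ^ 3 * 4" by (simp only: power_mult_distrib c4)
  have "1 \<le> 0.6299606 * 2 powr (2/3::real)"
    by (rule cube_le) (use e4 in \<open>simp_all add: power_divide\<close>)
  thus "1 / 2 powr (2/3) \<le> (0.6299606::real)" by (simp add: divide_le_eq)
qed

lemma sum2: "t > 0 \<Longrightarrow> (\<Sum>j\<in>{1..2::nat}. 1 / (2 powr (real j / real 2) * (t::real))) = (1 / 2 powr (1/2) + 1/2) / t"
  by (simp add: numeral_2_eq_2 field_simps)
lemma sum3: "t > 0 \<Longrightarrow> (\<Sum>j\<in>{1..3::nat}. 1 / (2 powr (real j / real 3) * (t::real))) = (1 / 2 powr (1/3) + 1 / 2 powr (2/3) + 1/2) / t"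
  by (simp add: numeral_3_eq_3 field_simps)

lemma lin:
  fixes u1 u2 v1 v2 a S :: real
  assumes "u1 \<le> a * 1.207107" "u2 \<le> a * 1.9236612" "v1 \<le> 1.414214 * S" "v2 \<le> 1.2599211 * S"
    "0 \<le> a" "0 \<le> S"
  shows "0.7624 * (u1 + v1) + 0.2376 * (u2 + v2) \<le> 1.3776 * (a + S)"
  using assms by (simp add: field_simps)

lemma round_policy:
  fixes k n D :: nat and K0 Tmin :: real and K H T :: "nat \<Rightarrow> real" and \<alpha> :: "nat \<Rightarrow> nat \<Rightarrow> real"
  assumes k: "k \<ge> 1" and tm: "Tmin > 0" and K0: "K0 \<ge> 0"
    and TT: "\<And>i. i < n \<Longrightarrow> T i \<ge> Tmin"
    and Kp: "\<And>i. i < n \<Longrightarrow> K i > 0" and Hp: "\<And>i. i < n \<Longrightarrow> H i > 0"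
    and ap: "\<And>i d. i < n \<Longrightarrow> d < D \<Longrightarrow> \<alpha> i d \<ge> 0"
    and res: "\<forall>d<D. (\<Sum>i<n. \<alpha> i d / T i) \<le> 1"
  shows "resource_feasible n D \<alpha> (\<lambda>i. round_up 2 k Tmin (T i))
    \<and> Fcost K0 K H n (\<lambda>i. round_up 2 k Tmin (T i))
      \<le> ereal (K0 * (\<Sum>j\<in>{1..k}. 1 / (2 powr (real j / real k) * Tmin))
                + 2 powr (1 / real k) * (\<Sum>i<n. K i / T i + H i * T i))"
proof -
  define R where "R i = round_up 2 k Tmin (T i)" for i
  define r where "r = (2::real) powr (1 / real k)"
  have r1: "r \<ge> 1" unfolding r_def by (rule ge_one_powr_ge_zero) auto
  have ch: "\<exists>p::int. p \<ge> 1 \<and> R i = 2 powr (real_of_int p / real k) * Tmin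
           \<and> T i < R i \<and> R i \<le> r * T i" if i: "i < n" for i
    unfolding R_def r_def by (rule round_up_char[OF k tm TT[OF i]])
  have Tpos: "T i > 0" if "i < n" for i using TT[OF that] tm by linarith
  have RT: "T i < R i" "R i \<le> r * T i" if "i < n" for i using ch[OF that] by auto
  have feas: "resource_feasible n D \<alpha> R"
    unfolding resource_feasible_def
  proof (intro conjI allI impI)
    fix i assume "i < n" thus "R i > 0" using RT Tpos by (meson less_trans)
  next
    fix d assume d: "d < D"
    have "(\<Sum>i<n. \<alpha> i d / R i) \<le> (\<Sum>i<n. \<alpha> i d / T i)"
    proof (rule sum_mono)
      fix i assume "i \<in> {..<n}"
      hence i: "i < n" by simp
      show "\<alpha> i d / R i \<le> \<alpha> i d / T i"
        using ap[OF i d] Tpos[OF i] RT(1)[OF i] by (intro divide_left_mono) auto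
    qed
    thus "(\<Sum>i<n. \<alpha> i d / R i) \<le> 1" using res d by (meson order_trans)
  qed
  have J: "Jcost K0 n R \<le> ereal (K0 * (\<Sum>j\<in>{1..k}. 1 / (2 powr (real j / real k) * Tmin)))"
    by (rule jbound[OF k tm K0]) (use ch in blast)
  have S: "(\<Sum>i<n. K i / R i + H i * R i) \<le> r * (\<Sum>i<n. K i / T i + H i * T i)"
    unfolding sum_distrib_left
  proof (rule sum_mono)
    fix i assume "i \<in> {..<n}"
    hence i: "i < n" by simp
    have a: "K i / R i \<le> K i / T i" using Kp[OF i] Tpos[OF i] RT(1)[OF i]
      by (intro divide_left_mono) auto
    have b0: "1 * (K i / T i) \<le> r * (K i / T i)"
      by (rule mult_right_mono) (use r1 Kp[OF i] Tpos[OF i] in auto)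
    have b: "K i / T i \<le> r * (K i / T i)" using b0 by simp
    have c: "H i * R i \<le> H i * (r * T i)" using Hp[OF i] RT(2)[OF i] by simp
    show "K i / R i + H i * R i \<le> r * (K i / T i + H i * T i)"
      using a b c by (simp add: algebra_simps)
  qed
  have "Fcost K0 K H n R \<le> ereal (K0 * (\<Sum>j\<in>{1..k}. 1 / (2 powr (real j / real k) * Tmin)))
         + ereal (r * (\<Sum>i<n. K i / T i + H i * T i))"
    unfolding Fcost_def by (rule add_mono[OF J]) (use S in simp)
  thus ?thesis using feas unfolding R_def r_def by simp
qed

theorem lemma2p4:
  fixes n D :: nat and K0 :: real and K H :: "nat \<Rightarrow> real"
    and \<alpha> :: "nat \<Rightarrow> nat \<Rightarrow> real" and Tmin :: real and T :: "nat \<Rightarrow> real"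
  assumes "n \<ge> 1" and "D \<ge> 1" and "K0 > 0"
    and "\<And>i. i < n \<Longrightarrow> K i > 0" and "\<And>i. i < n \<Longrightarrow> H i > 0"
    and "\<And>i d. i < n \<Longrightarrow> d < D \<Longrightarrow> \<alpha> i d \<ge> 0"
    and opt: "P_optimal n D K0 K H \<alpha> Tmin T"
    and "Tmin > 0"
  shows "resource_feasible n D \<alpha> (\<lambda>i. round_up 2 2 Tmin (T i))
       \<and> resource_feasible n D \<alpha> (\<lambda>i. round_up 2 3 Tmin (T i))
       \<and> min (Fcost K0 K H n (\<lambda>i. round_up 2 2 Tmin (T i)))
             (Fcost K0 K H n (\<lambda>i. round_up 2 3 Tmin (T i)))
           \<le> ereal (1.3776 * OPT_P n D K0 K H \<alpha>)"
proof -
  have feasP: "P_feasible n D \<alpha> Tmin T" using opt unfolding P_optimal_def by simp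
  have TT: "\<And>i. i < n \<Longrightarrow> T i \<ge> Tmin" and res: "\<forall>d<D. (\<Sum>i<n. \<alpha> i d / T i) \<le> 1"
    using feasP unfolding P_feasible_def by auto
  define S where "S = (\<Sum>i<n. K i / T i + H i * T i)"
  define a where "a = K0 / Tmin"
  have S0: "S \<ge> 0" unfolding S_def
  proof (rule sum_nonneg)
    fix i assume "i \<in> {..<n}"
    hence i: "i < n" by simp
    have "T i > 0" using TT[OF i] \<open>Tmin > 0\<close> by linarith
    thus "K i / T i + H i * T i \<ge> 0" using assms(4)[OF i] assms(5)[OF i] by simp
  qed
  have a0: "a \<ge> 0" unfolding a_def using assms(3) \<open>Tmin > 0\<close> by simp
  have OPT: "OPT_P n D K0 K H \<alpha> = a + S"
  proof -
    have "OPT_P n D K0 K H \<alpha> = P_obj K0 K H n Tmin T"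
      unfolding OPT_P_def
    proof (rule cInf_eq_minimum)
      show "P_obj K0 K H n Tmin T \<in> (\<lambda>x. P_obj K0 K H n (fst x) (snd x)) ` {(Tmin, T). P_feasible n D \<alpha> Tmin T}"
        using feasP by force
      fix y assume "y \<in> (\<lambda>x. P_obj K0 K H n (fst x) (snd x)) ` {(Tmin, T). P_feasible n D \<alpha> Tmin T}"
      then obtain Tm' T' where "P_feasible n D \<alpha> Tm' T'" "y = P_obj K0 K H n Tm' T'" by auto
      thus "P_obj K0 K H n Tmin T \<le> y" using opt unfolding P_optimal_def by simp
    qed
    thus ?thesis unfolding P_obj_def a_def S_def by simp
  qed
  have K0': "K0 \<ge> 0" using assms(3) by simp
  note R2 = round_policy[of 2 Tmin K0 n T K H D \<alpha>, OF _ \<open>Tmin > 0\<close> K0' TT assms(4,5,6) res]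
  note R3 = round_policy[of 3 Tmin K0 n T K H D \<alpha>, OF _ \<open>Tmin > 0\<close> K0' TT assms(4,5,6) res]
  define s2 where "s2 = 1 / 2 powr (1/2) + (1/2::real)"
  define s3 where "s3 = 1 / 2 powr (1/3) + 1 / 2 powr (2/3) + (1/2::real)"
  have c2: "K0 * (\<Sum>j\<in>{1..2::nat}. 1 / (2 powr (real j / real 2) * Tmin)) = a * s2"
    unfolding sum2[OF \<open>Tmin > 0\<close>] a_def s2_def by simp
  have c3: "K0 * (\<Sum>j\<in>{1..3::nat}. 1 / (2 powr (real j / real 3) * Tmin)) = a * s3"
    unfolding sum3[OF \<open>Tmin > 0\<close>] a_def s3_def by simp
  define A2 where "A2 = a * s2 + 2 powr (1/2) * S"
  define A3 where "A3 = a * s3 + 2 powr (1/3) * S"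
  have F2: "Fcost K0 K H n (\<lambda>i. round_up 2 2 Tmin (T i)) \<le> ereal A2"
    using R2 c2 unfolding A2_def S_def by simp
  have F3: "Fcost K0 K H n (\<lambda>i. round_up 2 3 Tmin (T i)) \<le> ereal A3"
    using R3 c3 unfolding A3_def S_def by simp
  have s2b: "s2 \<le> 1.207107" unfolding s2_def using nums(2) by simp
  have s3b: "s3 \<le> 1.9236612" unfolding s3_def using nums(4,5) by simp
  have m1: "a * s2 \<le> a * 1.207107" using s2b a0 by (rule mult_left_mono)
  have m2: "a * s3 \<le> a * 1.9236612" using s3b a0 by (rule mult_left_mono)
  have m3: "2 powr (1/2) * S \<le> 1.414214 * S" using nums(1) S0 by (rule mult_right_mono)
  have m4: "2 powr (1/3) * S \<le> 1.2599211 * S" using nums(3) S0 by (rule mult_right_mono)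
  have comb: "0.7624 * A2 + 0.2376 * A3 \<le> 1.3776 * (a + S)"
    unfolding A2_def A3_def by (rule lin[OF m1 m2 m3 m4 a0 S0])
  have mn: "min A2 A3 \<le> 1.3776 * (a + S)"
  proof (cases "A2 \<le> A3")
    case True thus ?thesis using comb by (simp add: min_def; linarith)
  next
    case False thus ?thesis using comb by (simp add: min_def; linarith)
  qed
  have "min (Fcost K0 K H n (\<lambda>i. round_up 2 2 Tmin (T i)))
             (Fcost K0 K H n (\<lambda>i. round_up 2 3 Tmin (T i))) \<le> ereal (min A2 A3)"
    using F2 F3 by (auto simp: min_def)
  also have "\<dots> \<le> ereal (1.3776 * OPT_P n D K0 K H \<alpha>)" unfolding OPT using mn by (simp only: ereal_less_eq(3))
  finally show ?thesis using R2 R3 by simp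
qed

end
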